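(* Let $V=\{x_1,\dots,x_n\}$ be a list of $n$ real numbers in the interval $[L,U]$ and let $k$ be an integer with $k<n$. Then a $k$-maximal variance subset of $V$ can be computed in $\mathcal{O}(n^2)$ time.
   Context: For a finite (multi)set $Q$ of reals with $|Q|=k$, its variance is $\mathrm{Var}[Q]=\frac{1}{k}\sum_{q\in Q}(q-\mu_Q)^2$ where $\mu_Q=\frac1k\sum_{q\in Q}q$. Given $V=\{x_1,\dots,x_n\}$ listed in ascending order and an integer $k<n$, a subset $Q\subset V$ (sub-multiset, i.e. a choice of $k$ of the $n$ entries) is a $k$-maximal variance subset of $V$ if $|Q|=k$ and $\mathrm{Var}[Q']\le\mathrm{Var}[Q]$ for every $Q'\subset V$ with $|Q'|=k$. *)

theory Defs
  imports Complex_Main "HOL-Library.Multiset"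
begin

definition mean_ms :: "real multiset \<Rightarrow> real" where
  "mean_ms Q = (\<Sum>q\<in>#Q. q) / real (size Q)"

definition var_ms :: "real multiset \<Rightarrow> real" where
  "var_ms Q = (\<Sum>q\<in>#Q. (q - mean_ms Q)^2) / real (size Q)"

definition k_max_var_subset :: "real multiset \<Rightarrow> real multiset \<Rightarrow> nat \<Rightarrow> bool" where
  "k_max_var_subset Q V k \<longleftrightarrow> Q \<subseteq># V \<and> size Q = k \<and>
     (\<forall>Q'. Q' \<subseteq># V \<and> size Q' = k \<longrightarrow> var_ms Q' \<le> var_ms Q)"

fun ins :: "real \<Rightarrow> real list \<Rightarrow> real list" where
  "ins x [] = [x]"
| "ins x (y # ys) = (if x \<le> y then x # y # ys else y # ins x ys)"

fun isort :: "real list \<Rightarrow> real list" where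
  "isort [] = []"
| "isort (x # xs) = ins x (isort xs)"

fun lsum :: "real list \<Rightarrow> real" where
  "lsum [] = 0"
| "lsum (x # xs) = x + lsum xs"

fun sqdev :: "real \<Rightarrow> real list \<Rightarrow> real" where
  "sqdev m [] = 0"
| "sqdev m (x # xs) = (x - m) * (x - m) + sqdev m xs"

fun lvar :: "real list \<Rightarrow> real" where
  "lvar ys = sqdev (lsum ys / real (length ys)) ys / real (length ys)"

fun cand :: "nat \<Rightarrow> nat \<Rightarrow> real list \<Rightarrow> real list" where
  "cand i k xs = take i xs @ drop (length xs - (k - i)) xs"

fun best :: "nat \<Rightarrow> nat \<Rightarrow> real list \<Rightarrow> real list" where
  "best 0 k xs = cand 0 k xs"
| "best (Suc i) k xs = (let c = cand (Suc i) k xs; r = best i k xs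
     in if lvar r \<le> lvar c then c else r)"

fun maxvar_alg :: "nat \<Rightarrow> real list \<Rightarrow> real list" where
  "maxvar_alg k xs = best k k (isort xs)"

text \<open>Step-count (running time) functions, written by hand in the style of the
  time_fun command of HOL-Library: every function call costs 1 plus the cost of the
  calls it makes; arithmetic and comparisons on reals are unit/zero cost (real-RAM model);
  the list primitives length, take, drop and append cost linear time as in
  HOL-Library.Time_Functions (length xs + 1, min n (length xs) + 1, length xs + 1).\<close>

fun T_ins :: "real \<Rightarrow> real list \<Rightarrow> nat" where
  "T_ins x [] = 1"
| "T_ins x (y # ys) = 1 + (if x \<le> y then 0 else T_ins x ys)"

fun T_isort :: "real list \<Rightarrow> nat" where
  "T_isort [] = 1"
| "T_isort (x # xs) = 1 + T_isort xs + T_ins x (isort xs)"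

fun T_lsum :: "real list \<Rightarrow> nat" where
  "T_lsum [] = 1"
| "T_lsum (x # xs) = 1 + T_lsum xs"

fun T_sqdev :: "real \<Rightarrow> real list \<Rightarrow> nat" where
  "T_sqdev m [] = 1"
| "T_sqdev m (x # xs) = 1 + T_sqdev m xs"

fun T_lvar :: "real list \<Rightarrow> nat" where
  "T_lvar ys = 1 + T_lsum ys + 2 * (length ys + 1)
     + T_sqdev (lsum ys / real (length ys)) ys"

fun T_cand :: "nat \<Rightarrow> nat \<Rightarrow> real list \<Rightarrow> nat" where
  "T_cand i k xs = 1 + (min i (length xs) + 1) + (length xs + 1)
     + (min (length xs - (k - i)) (length xs) + 1) + (length (take i xs) + 1)"

fun T_best :: "nat \<Rightarrow> nat \<Rightarrow> real list \<Rightarrow> nat" where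
  "T_best 0 k xs = 1 + T_cand 0 k xs"
| "T_best (Suc i) k xs = 1 + T_cand (Suc i) k xs + T_best i k xs
     + T_lvar (best i k xs) + T_lvar (cand (Suc i) k xs)"

fun T_maxvar_alg :: "nat \<Rightarrow> real list \<Rightarrow> nat" where
  "T_maxvar_alg k xs = 1 + T_isort xs + T_best k k (isort xs)"

end

theory Submission imports Defs begin

lemma mset_ins[simp]: "mset (ins x ys) = add_mset x (mset ys)"
  by (induction ys) auto
lemma set_ins[simp]: "set (ins x ys) = insert x (set ys)"
  by (induction ys) auto
lemma sorted_ins: "sorted ys \<Longrightarrow> sorted (ins x ys)"
  by (induction ys) auto
lemma mset_isort[simp]: "mset (isort xs) = mset xs"
  by (induction xs) auto
lemma sorted_isort: "sorted (isort xs)"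
  by (induction xs) (auto simp: sorted_ins)
lemma length_isort[simp]: "length (isort xs) = length xs"
  by (metis mset_isort size_mset)

lemma lsum_eq: "lsum xs = sum_list xs"
  by (induction xs) auto
lemma sqdev_eq: "sqdev m xs = (\<Sum>q\<in>#mset xs. (q - m)^2)"
  by (induction xs) (auto simp: power2_eq_square)
lemma lvar_eq: "lvar xs = var_ms (mset xs)"
  by (simp add: lsum_eq sqdev_eq var_ms_def mean_ms_def sum_mset_sum_list)

lemma sub_image:
  "Q \<subseteq># image_mset f M \<Longrightarrow> \<exists>M'. M' \<subseteq># M \<and> Q = image_mset f M'"
proof (induction M arbitrary: Q)
  case empty
  then show ?case by auto
next
  case (add x M)
  show ?case
  proof (cases "f x \<in># Q")
    case True
    have "Q - {#f x#} \<subseteq># image_mset f M"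
      using add.prems by (simp add: subset_eq_diff_conv)
    then obtain M'' where M'': "M'' \<subseteq># M" "Q - {#f x#} = image_mset f M''"
      using add.IH by blast
    have "Q = add_mset (f x) (Q - {#f x#})" using True by simp
    also have "\<dots> = image_mset f (add_mset x M'')" using M''(2) by simp
    finally have "Q = image_mset f (add_mset x M'')" .
    moreover have "add_mset x M'' \<subseteq># add_mset x M" using M''(1) by simp
    ultimately show ?thesis by blast
  next
    case False
    have "Q - {#f x#} \<subseteq># image_mset f M"
      using add.prems by (simp add: subset_eq_diff_conv)
    then have "Q \<subseteq># image_mset f M"
      using False by (simp add: diff_single_trivial)
    then obtain M' where "M' \<subseteq># M" "Q = image_mset f M'" using add.IH by blast
    moreover have "M \<subseteq># add_mset x M"
      by (metis add_mset_add_single mset_subset_eq_add_left)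
    ultimately show ?thesis using subset_mset.order_trans by blast
  qed
qed

lemma sub_mset_set:
  assumes "M \<subseteq># mset_set S" "finite S"
  shows "M = mset_set (set_mset M) \<and> set_mset M \<subseteq> S"
proof
  show "M = mset_set (set_mset M)"
  proof (rule multiset_eqI)
    fix x
    have "count M x \<le> count (mset_set S) x" using assms(1) by (simp add: mset_subset_eq_count)
    also have "\<dots> \<le> 1" using assms(2) by (simp add: count_mset_set')
    finally have c: "count M x \<le> 1" .
    have "0 < count M x \<longleftrightarrow> x \<in># M" by simp
    then show "count M x = count (mset_set (set_mset M)) x"
      using c by (auto simp: count_mset_set' simp del: count_greater_zero_iff)
  qed
  show "set_mset M \<subseteq> S" using assms
    using mset_subset_eqD by fastforce
qed

lemma var_alt:
  assumes "size M > 0"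
  shows "var_ms M = (\<Sum>q\<in>#M. q^2) / size M - ((\<Sum>q\<in>#M. q) / size M)^2"
proof -
  define k where "k = real (size M)"
  define m where "m = (\<Sum>q\<in>#M. q) / k"
  have k: "k > 0" using assms k_def by simp
  have "(\<Sum>q\<in>#M. (q - m)^2) = (\<Sum>q\<in>#M. q^2 + (-(2*m))*q + m^2)"
    by (intro arg_cong[of _ _ sum_mset] image_mset_cong) (simp add: power2_diff)
  also have "\<dots> = (\<Sum>q\<in>#M. q^2) + (-(2*m))*(\<Sum>q\<in>#M. q) + k * m^2"
    by (simp only: sum_mset.distrib sum_mset_distrib_left) (simp add: k_def)
  finally have "var_ms M = ((\<Sum>q\<in>#M. q^2) + (-(2*m))*(\<Sum>q\<in>#M. q) + k * m^2) / k"
    by (simp add: var_ms_def mean_ms_def m_def k_def)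
  also have "\<dots> = (\<Sum>q\<in>#M. q^2) / k - m^2"
    using k by (simp add: m_def field_simps power2_eq_square)
  finally show ?thesis by (simp add: m_def k_def)
qed

lemma quad_max:
  fixes a b c A B k :: real
  assumes "a \<le> b" "b \<le> c" "k \<ge> 1"
  defines "g \<equiv> \<lambda>x. (A + x^2)/k - ((B + x)/k)^2"
  shows "g b \<le> max (g a) (g c)"
proof (rule ccontr)
  assume "\<not> ?thesis"
  hence h1: "g b > g a" and h2: "g b > g c" by auto
  define \<alpha> where "\<alpha> = 1/k - 1/k^2"
  define \<beta> where "\<beta> = -2*B/k^2"
  have al: "\<alpha> \<ge> 0" using assms(3) by (simp add: \<alpha>_def field_simps power2_eq_square)
  have gx: "g x = \<alpha>*x^2 + \<beta>*x + (A/k - (B/k)^2)" for x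
    using assms(3) by (simp add: g_def \<alpha>_def \<beta>_def field_simps power2_eq_square)
  have d: "g y - g x = (y - x) * (\<alpha>*(x+y) + \<beta>)" for x y
    by (simp add: gx algebra_simps power2_eq_square)
  have "a < b" using h1 assms(1) by (cases "a = b") auto
  moreover have "0 < (b - a) * (\<alpha>*(a+b) + \<beta>)" using h1 d[of b a] by linarith
  ultimately have p1: "\<alpha>*(a+b) + \<beta> > 0"
    by (simp add: zero_less_mult_iff)
  have "b < c" using h2 assms(2) by (cases "b = c") auto
  moreover have "0 < (b - c) * (\<alpha>*(c+b) + \<beta>)" using h2 d[of b c] by linarith
  ultimately have p2: "\<alpha>*(b+c) + \<beta> < 0"
    by (simp add: zero_less_mult_iff add.commute)
  have "\<alpha>*(a+b) \<le> \<alpha>*(b+c)" using al assms by (intro mult_left_mono) auto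
  then show False using p1 p2 by linarith
qed


lemma var_add:
  "var_ms (add_mset x R) = ((\<Sum>q\<in>#R. q^2) + x^2)/real (size R + 1)
      - (((\<Sum>q\<in>#R. q) + x)/real (size R + 1))^2"
  by (subst var_alt) (auto simp: add.commute)

definition FF :: "real list \<Rightarrow> nat set \<Rightarrow> real" where
  "FF ys S = var_ms (image_mset (nth ys) (mset_set S))"

lemma swap_le:
  assumes "finite S" "b \<in> S" "a \<notin> S" "c \<notin> S" "ys!a \<le> ys!b" "ys!b \<le> ys!c"
  shows "FF ys S \<le> max (FF ys (insert a (S-{b}))) (FF ys (insert c (S-{b})))"
proof -
  define R where "R = image_mset (nth ys) (mset_set (S-{b}))"
  have e1: "image_mset (nth ys) (mset_set S) = add_mset (ys!b) R"
    using assms(1,2) by (simp add: R_def mset_set.remove)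
  have e2: "image_mset (nth ys) (mset_set (insert x (S-{b}))) = add_mset (ys!x) R" if "x \<notin> S" for x
    using assms(1) that by (simp add: R_def)
  have k: "real (size R + 1) \<ge> 1" by simp
  show ?thesis
    unfolding FF_def e1 e2[OF assms(3)] e2[OF assms(4)] var_add
    by (rule quad_max[OF assms(5,6) k])
qed

lemma card_FF_size: "finite S \<Longrightarrow> size (image_mset (nth ys) (mset_set S)) = card S"
  by simp


lemma exch:
  assumes srt: "sorted ys" and kn: "k < length ys"
  shows "finite S \<Longrightarrow> S \<subseteq> {..<length ys} \<Longrightarrow> card S = k \<Longrightarrow> {..<i} \<subseteq> S
    \<Longrightarrow> {length ys - j..<length ys} \<subseteq> S \<Longrightarrow> i + j \<le> k
    \<Longrightarrow> \<exists>i'\<le>k. FF ys S \<le> FF ys ({..<i'} \<union> {length ys - (k - i')..<length ys})"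
proof (induction "k - (i+j)" arbitrary: S i j rule: less_induct)
  case less
  define n where "n = length ys"
  have fin: "finite S" and Sn: "S \<subseteq> {..<n}" and cS: "card S = k" and pre: "{..<i} \<subseteq> S"
    and suf: "{n-j..<n} \<subseteq> S" and ijk: "i + j \<le> k"
    using less.prems by (auto simp: n_def)
  have kn': "k < n" using kn n_def by simp
  have cU: "card ({..<i} \<union> {n-j..<n}) = i + j"
    using kn' ijk by (subst card_Un_disjoint) auto
  have sub: "{..<i} \<union> {n-j..<n} \<subseteq> S" using pre suf by auto
  show ?case
  proof (cases "i + j = k")
    case True
    have "S = {..<i} \<union> {n-j..<n}"
      using card_subset_eq[OF fin sub] True cS cU by simp
    moreover have "n - (k - i) = n - j" using True by simp
    ultimately show ?thesis using True by (intro exI[of _ i]) (auto simp: n_def)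
  next
    case False
    hence lt: "i + j < k" using ijk by simp
    have "S \<noteq> {..<i} \<union> {n-j..<n}" using cU cS lt by auto
    then obtain b where b: "b \<in> S" "b \<notin> {..<i} \<union> {n-j..<n}" using sub by blast
    have bn: "b < n" using b Sn by auto
    have ib: "i \<le> b" and bj: "b < n - j" using b bn by auto
    show ?thesis
    proof (cases "i \<in> S")
      case True
      have "{..<Suc i} \<subseteq> S" using True pre by (auto simp: lessThan_Suc)
      moreover have "k - (Suc i + j) < k - (i + j)" using lt by simp
      ultimately show ?thesis using fin Sn cS suf lt
        by (intro less.hyps[of "Suc i" j S]) (auto simp: n_def)
    next
      case iS: False
      have nsj: "n - Suc j = n - j - 1" by simp
      have ins: "{n - Suc j..<n} = insert (n - j - 1) {n-j..<n}" using bj by auto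
      show ?thesis
      proof (cases "n - j - 1 \<in> S")
        case True
        have "{n - Suc j..<n} \<subseteq> S" using True suf ins by auto
        moreover have "k - (i + Suc j) < k - (i + j)" using lt by simp
        ultimately show ?thesis using fin Sn cS pre lt
          by (intro less.hyps[of i "Suc j" S]) (auto simp: n_def)
      next
        case cS2: False
        have ib': "i < b" using ib iS b by (cases "i = b") auto
        have bj': "b < n - j - 1" using bj cS2 b by (cases "b = n - j - 1") auto
        have v1: "ys!i \<le> ys!b" using srt ib' bj' by (intro sorted_nth_mono) (auto simp: n_def)
        have v2: "ys!b \<le> ys!(n-j-1)" using srt ib' bj' by (intro sorted_nth_mono) (auto simp: n_def)
        define S1 where "S1 = insert i (S - {b})"
        define S2 where "S2 = insert (n-j-1) (S - {b})"
        have sw: "FF ys S \<le> max (FF ys S1) (FF ys S2)"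
          unfolding S1_def S2_def by (rule swap_le[OF fin b(1) iS cS2 v1 v2])
        have cpos: "card S > 0" using fin b(1) card_gt_0_iff by blast
        have cS1: "card S1 = k" using fin b(1) iS cS unfolding S1_def
          using cpos by (subst card_insert_disjoint) (auto simp: card_Diff_singleton)
        have cS2': "card S2 = k" using fin b(1) cS2 cS unfolding S2_def
          using cpos by (subst card_insert_disjoint) (auto simp: card_Diff_singleton)
        have S1n: "S1 \<subseteq> {..<n}" using Sn ib' bj' unfolding S1_def by auto
        have S2n: "S2 \<subseteq> {..<n}" using Sn ib' bj' unfolding S2_def by auto
        have p1: "{..<Suc i} \<subseteq> S1" using pre ib' unfolding S1_def by (auto simp: lessThan_Suc)
        have s1: "{n-j..<n} \<subseteq> S1" using suf bj' unfolding S1_def by auto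
        have p2: "{..<i} \<subseteq> S2" using pre ib' unfolding S2_def by auto
        have s2: "{n - Suc j..<n} \<subseteq> S2" using suf bj' ins unfolding S2_def by auto
        have m1: "k - (Suc i + j) < k - (i + j)" "k - (i + Suc j) < k - (i + j)" using lt by simp_all
        have le1: "Suc i + j \<le> k" and le2: "i + Suc j \<le> k" using lt by simp_all
        have fS1: "finite S1" "finite S2" using fin unfolding S1_def S2_def by auto
        show ?thesis
        proof (cases "FF ys S \<le> FF ys S1")
          case True
          obtain i' where "i' \<le> k" "FF ys S1 \<le> FF ys ({..<i'} \<union> {length ys - (k - i')..<length ys})"
            using less.hyps[OF m1(1) fS1(1) S1n[unfolded n_def] cS1 p1 s1[unfolded n_def] le1] by blast
          then show ?thesis using True by (intro exI[of _ i']) auto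
        next
          case False
          hence "FF ys S \<le> FF ys S2" using sw by linarith
          moreover obtain i' where "i' \<le> k" "FF ys S2 \<le> FF ys ({..<i'} \<union> {length ys - (k - i')..<length ys})"
            using less.hyps[OF m1(2) fS1(2) S2n[unfolded n_def] cS2' p2 s2[unfolded n_def] le2] by blast
          ultimately show ?thesis by (intro exI[of _ i']) auto
        qed
      qed
    qed
  qed
qed


declare lvar.simps[simp del] cand.simps[simp del]

lemma image_nth_take: "i \<le> length ys \<Longrightarrow> image_mset (nth ys) (mset_set {..<i}) = mset (take i ys)"
proof -
  assume a: "i \<le> length ys"
  have "mset (take i ys) = mset (map (nth ys) [0..<i])"
    using a by (intro arg_cong[of _ _ mset] nth_equalityI) auto
  also have "\<dots> = image_mset (nth ys) (mset [0..<i])" by (simp only: mset_map)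
  also have "\<dots> = image_mset (nth ys) (mset_set {..<i})" by (simp only: mset_set_upto_eq_mset_upto)
  finally show ?thesis by simp
qed

lemma image_nth_drop: "p \<le> length ys \<Longrightarrow> image_mset (nth ys) (mset_set {p..<length ys}) = mset (drop p ys)"
proof -
  assume a: "p \<le> length ys"
  have "mset (drop p ys) = mset (map (nth ys) [p..<length ys])"
    using a by (intro arg_cong[of _ _ mset] nth_equalityI) auto
  also have "\<dots> = image_mset (nth ys) (mset [p..<length ys])" by (simp only: mset_map)
  also have "\<dots> = image_mset (nth ys) (mset_set {p..<length ys})" by (simp only: mset_upt)
  finally show ?thesis by simp
qed

lemma map_nth_upt_take: "i \<le> length ys \<Longrightarrow> map (nth ys) [0..<i] = take i ys"
  by (rule nth_equalityI) auto

lemma map_nth_upt_drop: "p \<le> length ys \<Longrightarrow> map (nth ys) [p..<length ys] = drop p ys"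
  by (rule nth_equalityI) auto

lemma mset_as_image: "mset ys = image_mset (nth ys) (mset_set {..<length ys})"
  using image_nth_take[of "length ys" ys] by simp

lemma cand_image:
  assumes "i \<le> k" "k < length ys"
  shows "image_mset (nth ys) (mset_set ({..<i} \<union> {length ys - (k - i)..<length ys})) = mset (cand i k ys)"
proof -
  define n where "n = length ys"
  have d: "{..<i} \<inter> {n - (k - i)..<n} = {}" using assms by (auto simp: n_def)
  have "image_mset (nth ys) (mset_set ({..<i} \<union> {n - (k - i)..<n}))
      = image_mset (nth ys) (mset_set {..<i}) + image_mset (nth ys) (mset_set {n - (k - i)..<n})"
    using d by (simp add: mset_set_Union)
  also have "image_mset (nth ys) (mset_set {..<i}) = mset (take i ys)"
    using assms by (intro image_nth_take) simp
  also have "image_mset (nth ys) (mset_set {n - (k - i)..<n}) = mset (drop (n - (k - i)) ys)"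
    unfolding n_def by (intro image_nth_drop) simp
  finally show ?thesis by (simp add: n_def cand.simps)
qed

lemma cand_sub:
  assumes "i \<le> k" "k < length ys"
  shows "mset (cand i k ys) \<subseteq># mset ys \<and> size (mset (cand i k ys)) = k"
proof -
  define S where "S = {..<i} \<union> {length ys - (k - i)..<length ys}"
  have S: "S \<subseteq> {..<length ys}" "finite S" using assms by (auto simp: S_def)
  have cS: "card S = k" unfolding S_def using assms
    by (subst card_Un_disjoint) auto
  have "mset (cand i k ys) = image_mset (nth ys) (mset_set S)"
    using cand_image[OF assms] by (simp add: S_def)
  moreover have "image_mset (nth ys) (mset_set S) \<subseteq># mset ys"
    unfolding mset_as_image[of ys]
    by (intro image_mset_subseteq_mono subset_imp_msubset_mset_set S) auto
  ultimately show ?thesis using cS S by simp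
qed

lemma best_is_cand: "\<exists>i\<le>m. best m k xs = cand i k xs"
proof (induction m)
  case 0 then show ?case by simp
next
  case (Suc m)
  then obtain i where "i \<le> m" "best m k xs = cand i k xs" by blast
  then show ?case by (auto simp: Let_def simp del: cand.simps lvar.simps intro: exI[of _ "Suc m"] exI[of _ i])
qed

lemma best_max: "i \<le> m \<Longrightarrow> lvar (cand i k xs) \<le> lvar (best m k xs)"
proof (induction m)
  case 0 then show ?case by simp
next
  case (Suc m)
  show ?case
  proof (cases "i = Suc m")
    case True then show ?thesis by (auto simp: Let_def simp del: cand.simps lvar.simps)
  next
    case False
    then have "lvar (cand i k xs) \<le> lvar (best m k xs)" using Suc by simp
    then show ?thesis by (auto simp: Let_def simp del: cand.simps lvar.simps)
  qed
qed

theorem correct: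
  assumes "k < length xs"
  shows "k_max_var_subset (mset (maxvar_alg k xs)) (mset xs) k"
proof -
  define ys where "ys = isort xs"
  define n where "n = length ys"
  have srt: "sorted ys" by (simp add: ys_def sorted_isort)
  have kn: "k < length ys" using assms by (simp add: ys_def)
  have mys: "mset ys = mset xs" by (simp add: ys_def)
  obtain i0 where i0: "i0 \<le> k" "best k k ys = cand i0 k ys" using best_is_cand by blast
  have alg: "maxvar_alg k xs = cand i0 k ys" using i0 by (simp add: ys_def)
  have sub: "mset (cand i0 k ys) \<subseteq># mset ys" "size (mset (cand i0 k ys)) = k"
    using cand_sub[OF i0(1) kn] by auto
  have opt: "var_ms Q' \<le> var_ms (mset (cand i0 k ys))" if Q': "Q' \<subseteq># mset ys" "size Q' = k" for Q'
  proof -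
    obtain M' where M': "M' \<subseteq># mset_set {..<length ys}" "Q' = image_mset (nth ys) M'"
      using sub_image[of Q' "nth ys" "mset_set {..<length ys}"] Q'(1) mset_as_image[of ys] by auto
    define S where "S = set_mset M'"
    have MS: "M' = mset_set S" "S \<subseteq> {..<length ys}" using sub_mset_set[OF M'(1)] by (auto simp: S_def)
    have fS: "finite S" using MS(2) finite_subset by blast
    have cS: "card S = k" using Q'(2) M'(2) MS(1) by simp
    obtain i' where i': "i' \<le> k" "FF ys S \<le> FF ys ({..<i'} \<union> {length ys - (k - i')..<length ys})"
      using exch[OF srt kn fS MS(2) cS, of 0 0] by auto
    have "var_ms Q' = FF ys S" using M'(2) MS(1) by (simp add: FF_def)
    also have "\<dots> \<le> var_ms (mset (cand i' k ys))" using i'(2) cand_image[OF i'(1) kn] by (simp add: FF_def)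
    also have "\<dots> = lvar (cand i' k ys)" by (simp add: lvar_eq del: lvar.simps cand.simps)
    also have "\<dots> \<le> lvar (best k k ys)" using best_max[OF i'(1)] .
    also have "\<dots> = var_ms (mset (cand i0 k ys))" using i0(2) by (simp add: lvar_eq del: lvar.simps cand.simps)
    finally show ?thesis .
  qed
  show ?thesis unfolding k_max_var_subset_def alg using sub opt mys by auto
qed


lemma T_ins_le: "T_ins x ys \<le> length ys + 1"
  by (induction ys) auto

lemma T_isort_le: "T_isort xs \<le> (length xs + 1)^2"
proof (induction xs)
  case Nil then show ?case by simp
next
  case (Cons x xs)
  have "T_ins x (isort xs) \<le> length xs + 1" using T_ins_le[of x "isort xs"] by simp
  then show ?case using Cons by (simp add: power2_eq_square)
qed

lemma T_lsum_eq: "T_lsum ys = length ys + 1" by (induction ys) auto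
lemma T_sqdev_eq: "T_sqdev m ys = length ys + 1" by (induction ys) auto

lemma T_lvar_eq: "T_lvar ys = 4 * length ys + 5"
  by (simp add: T_lsum_eq T_sqdev_eq)

lemma len_cand: "length (cand i k xs) \<le> 2 * length xs"
  by (simp add: cand.simps)

lemma len_best: "length (best m k xs) \<le> 2 * length xs"
  using best_is_cand[of m k xs] len_cand by metis

lemma T_cand_le: "T_cand i k xs \<le> 4 * length xs + 5"
  by simp

lemma T_best_le: "T_best m k xs \<le> (m + 1) * (20 * length xs + 16)"
proof (induction m)
  case 0 then show ?case using T_cand_le[of 0 k xs] by simp
next
  case (Suc m)
  have a: "T_lvar (best m k xs) \<le> 8 * length xs + 5"
    using len_best[of m k xs] by (simp only: T_lvar_eq)
  have b: "T_lvar (cand (Suc m) k xs) \<le> 8 * length xs + 5"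
    using len_cand[of "Suc m" k xs] by (simp only: T_lvar_eq)
  have c: "T_cand (Suc m) k xs \<le> 4 * length xs + 5" by (rule T_cand_le)
  have "T_best (Suc m) k xs = 1 + T_cand (Suc m) k xs + T_best m k xs
     + T_lvar (best m k xs) + T_lvar (cand (Suc m) k xs)" by simp
  also have "\<dots> \<le> (m + 1) * (20 * length xs + 16) + (20 * length xs + 16)"
    using a b c Suc by linarith
  finally show ?case by simp
qed

lemma T_total: 
  assumes "k < length xs"
  shows "T_maxvar_alg k xs \<le> 41 * (length xs)^2"
proof -
  define n where "n = length xs"
  have n1: "1 \<le> n" using assms n_def by simp
  have t1: "T_isort xs \<le> n^2 + 2*n + 1" using T_isort_le[of xs] by (simp add: n_def power2_eq_square algebra_simps)
  have "T_best k k (isort xs) \<le> (k + 1) * (20 * n + 16)"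
    using T_best_le[of k k "isort xs"] by (simp add: n_def)
  also have "\<dots> \<le> n * (20 * n + 16)" using assms n_def by (intro mult_le_mono1) simp
  finally have t2: "T_best k k (isort xs) \<le> 20 * n^2 + 16 * n" by (simp add: power2_eq_square algebra_simps)
  have "n \<le> n^2" using n1 by (simp add: power2_eq_square)
  moreover have "1 \<le> n^2" using n1 by (simp add: power2_eq_square)
  ultimately show ?thesis using t1 t2 by (simp add: n_def[symmetric])
qed

theorem mainTheorem2:
  shows "(\<forall>(xs :: real list) (L :: real) (U :: real) (k :: nat).
            set xs \<subseteq> {L..U} \<and> k < length xs \<longrightarrow>
            k_max_var_subset (mset (maxvar_alg k xs)) (mset xs) k)
       \<and> (\<exists>c :: real. \<forall>(xs :: real list) (L :: real) (U :: real) (k :: nat).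
            set xs \<subseteq> {L..U} \<and> k < length xs \<longrightarrow>
            real (T_maxvar_alg k xs) \<le> c * (real (length xs))^2)"
proof (intro conjI allI impI)
  fix xs :: "real list" and L U :: real and k :: nat
  assume "set xs \<subseteq> {L..U} \<and> k < length xs"
  then show "k_max_var_subset (mset (maxvar_alg k xs)) (mset xs) k" using correct by blast
next
  show "\<exists>c :: real. \<forall>(xs :: real list) (L :: real) (U :: real) (k :: nat).
            set xs \<subseteq> {L..U} \<and> k < length xs \<longrightarrow>
            real (T_maxvar_alg k xs) \<le> c * (real (length xs))^2"
  proof (intro exI[of _ 41] allI impI)
    fix xs :: "real list" and L U :: real and k :: nat
    assume "set xs \<subseteq> {L..U} \<and> k < length xs"
    then have "T_maxvar_alg k xs \<le> 41 * (length xs)^2" using T_total by blast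
    then have "real (T_maxvar_alg k xs) \<le> real (41 * (length xs)^2)" by (rule of_nat_mono)
    then show "real (T_maxvar_alg k xs) \<le> 41 * (real (length xs))^2" by simp
  qed
qed

end
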